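(* Let $f$ be a $T$-norm. If $f$ is an Archimedean copula, then $f$ satisfies both property $A$ and property $B$.
   Context: A $T$-norm is a function $f:[0,1]^2\to[0,1]$ that is commutative, associative, monotonic ($x\leq y$ implies $f(x,z)\leq f(y,z)$) and satisfies $f(x,1)=x$. A $T$-norm $f$ is Archimedean if for all $0<x,y<1$ there is $n$ with $x^{\otimes n}\leq y$, where $x^{\otimes n}=f(x,f(x,\dots))$ is the $n$-fold product. A copula is a function $f:[0,1]^2\to[0,1]$ that satisfies neutrality of $1$, is monotonic, and satisfies property $B$. Property $A$: for all $0\leq x\leq y\leq z\leq w\leq 1$, $w+x\leq y+z$ implies $f(x,w)\leq f(y,z)$. Property $B$: for all $0\leq x\leq y\leq1$ and $0\leq z\leq w\leq1$, $f(x,w)-f(x,z)\leq f(y,w)-f(y,z)$. *)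

theory Defs
  imports Main "HOL.Real"
begin

text \<open>Binary operations on the unit square are modelled as functions
  real => real => real; all conditions are relativised to [0,1].\<close>

definition unit_op :: "(real \<Rightarrow> real \<Rightarrow> real) \<Rightarrow> bool" where
  "unit_op f \<longleftrightarrow> (\<forall>x\<in>{0..1}. \<forall>y\<in>{0..1}. f x y \<in> {0..1})"

definition is_tnorm :: "(real \<Rightarrow> real \<Rightarrow> real) \<Rightarrow> bool" where
  "is_tnorm f \<longleftrightarrow> unit_op f
     \<and> (\<forall>x\<in>{0..1}. \<forall>y\<in>{0..1}. f x y = f y x)
     \<and> (\<forall>x\<in>{0..1}. \<forall>y\<in>{0..1}. \<forall>z\<in>{0..1}. f x (f y z) = f (f x y) z)
     \<and> (\<forall>x\<in>{0..1}. \<forall>y\<in>{0..1}. \<forall>z\<in>{0..1}. x \<le> y \<longrightarrow> f x z \<le> f y z)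
     \<and> (\<forall>x\<in>{0..1}. f x 1 = x)"

fun tpow :: "(real \<Rightarrow> real \<Rightarrow> real) \<Rightarrow> real \<Rightarrow> nat \<Rightarrow> real" where
  "tpow f x 0 = 1"
| "tpow f x (Suc n) = f x (tpow f x n)"

definition archimedean :: "(real \<Rightarrow> real \<Rightarrow> real) \<Rightarrow> bool" where
  "archimedean f \<longleftrightarrow> (\<forall>x y. 0 < x \<and> x < 1 \<and> 0 < y \<and> y < 1 \<longrightarrow> (\<exists>n. tpow f x n \<le> y))"

definition property_B :: "(real \<Rightarrow> real \<Rightarrow> real) \<Rightarrow> bool" where
  "property_B f \<longleftrightarrow> (\<forall>x y z w. 0 \<le> x \<and> x \<le> y \<and> y \<le> 1 \<and> 0 \<le> z \<and> z \<le> w \<and> w \<le> 1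
      \<longrightarrow> f x w - f x z \<le> f y w - f y z)"

definition property_A :: "(real \<Rightarrow> real \<Rightarrow> real) \<Rightarrow> bool" where
  "property_A f \<longleftrightarrow> (\<forall>x y z w. 0 \<le> x \<and> x \<le> y \<and> y \<le> z \<and> z \<le> w \<and> w \<le> 1
      \<and> w + x \<le> y + z \<longrightarrow> f x w \<le> f y z)"

definition is_copula :: "(real \<Rightarrow> real \<Rightarrow> real) \<Rightarrow> bool" where
  "is_copula f \<longleftrightarrow> unit_op f
     \<and> (\<forall>x\<in>{0..1}. f x 1 = x \<and> f 1 x = x)
     \<and> (\<forall>x\<in>{0..1}. \<forall>y\<in>{0..1}. \<forall>z\<in>{0..1}. x \<le> y \<longrightarrow> f x z \<le> f y z \<and> f z x \<le> f z y)
     \<and> property_B f"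

end

theory Submission
  imports Defs "HOL-Analysis.Analysis"
begin

lemma lip2:
  assumes c: "is_copula f" and y: "0 \<le> y" "y \<le> 1" and ab: "0 \<le> a" "a \<le> b" "b \<le> 1"
  shows "f y b - f y a \<le> b - a"
proof -
  have "f y b - f y a \<le> f 1 b - f 1 a"
    using c y ab unfolding is_copula_def property_B_def by blast
  moreover have "f 1 b = b" "f 1 a = a" using c ab unfolding is_copula_def by auto
  ultimately show ?thesis by simp
qed

lemma exists_v:
  assumes c: "is_copula f" and z0: "\<forall>t\<in>{0..1}. f t 0 = 0"
    and y: "0 \<le> y" "y \<le> 1" and x: "0 \<le> x" "x \<le> y"
  shows "\<exists>v. 0 \<le> v \<and> v \<le> 1 \<and> f y v = x"
proof -
  have mono: "\<And>a b. 0 \<le> a \<Longrightarrow> a \<le> b \<Longrightarrow> b \<le> 1 \<Longrightarrow> f y a \<le> f y b"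
    using c y unfolding is_copula_def by auto
  have cont: "continuous_on {0..1} (f y)"
    unfolding continuous_on_iff
  proof (intro ballI allI impI)
    fix a e assume a: "a \<in> {0..(1::real)}" and e: "0 < (e::real)"
    show "\<exists>d>0. \<forall>b\<in>{0..1}. dist b a < d \<longrightarrow> dist (f y b) (f y a) < e"
    proof (intro exI[of _ e] conjI ballI impI)
      fix b assume b: "b \<in> {0..(1::real)}" and d: "dist b a < e"
      have "\<bar>f y b - f y a\<bar> \<le> \<bar>b - a\<bar>"
      proof (cases "a \<le> b")
        case True
        then show ?thesis using lip2[OF c y, of a b] mono[of a b] a b by auto
      next
        case False
        then show ?thesis using lip2[OF c y, of b a] mono[of b a] a b by auto
      qed
      then show "dist (f y b) (f y a) < e" using d by (simp add: dist_real_def)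
    qed (use e in auto)
  qed
  have "f y 0 \<le> x" using z0 y x by auto
  moreover have "x \<le> f y 1" using c y x unfolding is_copula_def by auto
  ultimately obtain v where "0 \<le> v" "v \<le> 1" "f y v = x"
    using IVT'[of "f y" 0 x 1] cont by auto
  then show ?thesis by blast
qed

theorem corollary3:
  fixes f :: "real \<Rightarrow> real \<Rightarrow> real"
  assumes "is_tnorm f" and "archimedean f" and "is_copula f"
  shows "property_A f \<and> property_B f"
proof
  show "property_B f" using assms(3) unfolding is_copula_def by blast
  have T: "unit_op f" "\<forall>x\<in>{0..1}. \<forall>y\<in>{0..1}. f x y = f y x"
     "\<forall>x\<in>{0..1}. \<forall>y\<in>{0..1}. \<forall>z\<in>{0..1}. f x (f y z) = f (f x y) z"
     "\<forall>x\<in>{0..1}. \<forall>y\<in>{0..1}. \<forall>z\<in>{0..1}. x \<le> y \<longrightarrow> f x z \<le> f y z"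
     "\<forall>x\<in>{0..1}. f x 1 = x"
    using assms(1) unfolding is_tnorm_def by auto
  have C: "\<forall>x\<in>{0..1}. \<forall>y\<in>{0..1}. \<forall>z\<in>{0..1}. x \<le> y \<longrightarrow> f x z \<le> f y z \<and> f z x \<le> f z y"
    using assms(3) unfolding is_copula_def by auto
  have z0: "\<forall>t\<in>{0..1}. f t 0 = 0"
  proof
    fix t :: real assume t: "t \<in> {0..1}"
    have "f t 0 = f 0 t" using T(2) t by (meson atLeastAtMost_iff order_refl zero_le_one)
    also have "\<dots> \<le> f 0 1" using C t by (meson atLeastAtMost_iff order_refl zero_le_one)
    also have "\<dots> = 0" using T(5) by simp
    finally have "f t 0 \<le> 0" .
    moreover have "f t 0 \<ge> 0" using T(1) t unfolding unit_op_def by auto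
    ultimately show "f t 0 = 0" by linarith
  qed
  show "property_A f"
    unfolding property_A_def
  proof (intro allI impI)
    fix x y z w :: real
    assume h: "0 \<le> x \<and> x \<le> y \<and> y \<le> z \<and> z \<le> w \<and> w \<le> 1 \<and> w + x \<le> y + z"
    have xi: "x \<in> {0..1}" and yi: "y \<in> {0..1}" and zi: "z \<in> {0..1}" and wi: "w \<in> {0..1}"
      using h by auto
    obtain v where v: "0 \<le> v" "v \<le> 1" "f y v = x"
      using exists_v[OF assms(3) z0, of y x] h by auto
    have vi: "v \<in> {0..1}" using v by auto
    have "f y 1 - f y v \<le> f w 1 - f w v"
    proof -
      have "\<forall>x y z w. 0 \<le> x \<and> x \<le> y \<and> y \<le> 1 \<and> 0 \<le> z \<and> z \<le> w \<and> w \<le> 1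
        \<longrightarrow> f x w - f x z \<le> f y w - f y z" using \<open>property_B f\<close> unfolding property_B_def .
      hence "0 \<le> y \<and> y \<le> w \<and> w \<le> 1 \<and> 0 \<le> v \<and> v \<le> 1 \<and> (1::real) \<le> 1
        \<longrightarrow> f y 1 - f y v \<le> f w 1 - f w v" by blast
      thus ?thesis using h v by linarith
    qed
    moreover have "f y 1 = y" "f w 1 = w" using T(5) yi wi by auto
    ultimately have "f w v \<le> z" using h v by linarith
    moreover have "f w v = f v w" using T(2) wi vi by blast
    ultimately have fvw: "f v w \<le> z" by simp
    have fvwi: "f v w \<in> {0..1}" using T(1) vi wi unfolding unit_op_def by blast
    have "f y (f v w) = f (f y v) w" using T(3) yi vi wi by blast
    hence "f x w = f y (f v w)" using v by simp
    also have "\<dots> \<le> f y z"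
      using C fvwi zi yi fvw by blast
    finally show "f x w \<le> f y z" .
  qed
qed

end
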